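(* Consider $N=Ln$ units in $L$ strata of equal size $n$, stratum $l$ containing $n_{l(1)}$ treated and $n_{l(0)}$ control units, with $n_1=\sum_l n_{l(1)}>0$, $n_0=\sum_l n_{l(0)}>0$ and $\sum_l n_{l(0)}n_{l(1)}>0$. Let $\sigma_0^2>0$ and $\boldsymbol\Sigma=\boldsymbol I_L\otimes\boldsymbol J_n+\sigma_0^2\boldsymbol I_N$ (units ordered by stratum, $\boldsymbol J_n$ the $n\times n$ all-ones matrix). Let $(\hat\mu,\hat\tau)'=\big[X'\boldsymbol\Sigma^{-1}X\big]^{-1}X'\boldsymbol\Sigma^{-1}\boldsymbol Y$ with $X=(\boldsymbol 1_N,\boldsymbol A)$. Then $\hat\tau=\lambda\hat\tau_1+(1-\lambda)\hat\tau_0$, where $$\hat\tau_0=\bar Y_1-\bar Y_0,\qquad \hat\tau_1=\frac{\sum_l n_{l(0)}n_{l(1)}(\bar Y_{l(1)}-\bar Y_{l(0)})}{\sum_l n_{l(0)}n_{l(1)}},\qquad \lambda=\frac{N\sum_l n_{l(0)}n_{l(1)}}{n_1n_0\sigma_0^2+N\sum_l n_{l(0)}n_{l(1)}},$$ $\bar Y_1,\bar Y_0$ being the overall treated and control sample means and $\bar Y_{l(a)}$ the mean outcome of group $a$ within stratum $l$. In particular $\lambda\to1$ (so $\hat\tau\to\hat\tau_1$) as $\sigma_0^2\to0$, and $\lambda$ is decreasing in $\sigma_0^2$.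
   Context: $\boldsymbol Y$ is the vector of observed outcomes and $\boldsymbol A$ the vector of binary treatment indicators. This is the generalized least squares estimate of $\tau$ in the nonparametric GP model $\boldsymbol Y\sim MVN(\mu\boldsymbol 1+\tau\boldsymbol A,\boldsymbol\Sigma)$ whose GP covariance encodes the known stratum structure ($k_{ij}=1$ within a stratum, $0$ otherwise). *)

theory Defs
  imports "HOL-Analysis.Analysis"
begin

text \<open>Units are indexed by pairs (l, j) of the finite types 'l (strata, L = CARD('l))
  and 'm (position within a stratum, n = CARD('m)). A is the 0/1 treatment vector,
  Y the outcome vector.\<close>

definition Sigma_mat :: "real \<Rightarrow> real^('l::finite \<times> 'm::finite)^('l \<times> 'm)" where
  "Sigma_mat s = (\<chi> i j. (if fst i = fst j then 1 else 0) + (if i = j then s else 0))"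

definition design :: "real^('l::finite \<times> 'm::finite) \<Rightarrow> real^2^('l \<times> 'm)" where
  "design A = (\<chi> i k. if k = 1 then 1 else A $ i)"

definition gls :: "real \<Rightarrow> real^('l::finite \<times> 'm::finite) \<Rightarrow> real^('l \<times> 'm) \<Rightarrow> real^2" where
  "gls s A Y = (matrix_inv (transpose (design A) ** matrix_inv (Sigma_mat s) ** design A)
                 ** transpose (design A) ** matrix_inv (Sigma_mat s)) *v Y"

definition tau_hat :: "real \<Rightarrow> real^('l::finite \<times> 'm::finite) \<Rightarrow> real^('l \<times> 'm) \<Rightarrow> real" where
  "tau_hat s A Y = gls s A Y $ 2"

definition n_la :: "real^('l::finite \<times> 'm::finite) \<Rightarrow> 'l \<Rightarrow> real \<Rightarrow> nat" where
  "n_la A l a = card {j. A $ (l, j) = a}"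

definition n_a :: "real^('l::finite \<times> 'm::finite) \<Rightarrow> real \<Rightarrow> nat" where
  "n_a A a = card {i. A $ i = a}"

definition Ybar_la :: "real^('l::finite \<times> 'm::finite) \<Rightarrow> real^('l \<times> 'm) \<Rightarrow> 'l \<Rightarrow> real \<Rightarrow> real" where
  "Ybar_la A Y l a = (\<Sum>j\<in>{j. A $ (l, j) = a}. Y $ (l, j)) / real (n_la A l a)"

definition Ybar_a :: "real^('l::finite \<times> 'm::finite) \<Rightarrow> real^('l \<times> 'm) \<Rightarrow> real \<Rightarrow> real" where
  "Ybar_a A Y a = (\<Sum>i\<in>{i. A $ i = a}. Y $ i) / real (n_a A a)"

definition W :: "real^('l::finite \<times> 'm::finite) \<Rightarrow> real" where
  "W A = (\<Sum>l\<in>UNIV. real (n_la A l 0) * real (n_la A l 1))"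

definition tau0_hat :: "real^('l::finite \<times> 'm::finite) \<Rightarrow> real^('l \<times> 'm) \<Rightarrow> real" where
  "tau0_hat A Y = Ybar_a A Y 1 - Ybar_a A Y 0"

definition tau1_hat :: "real^('l::finite \<times> 'm::finite) \<Rightarrow> real^('l \<times> 'm) \<Rightarrow> real" where
  "tau1_hat A Y = (\<Sum>l\<in>UNIV. real (n_la A l 0) * real (n_la A l 1)
                     * (Ybar_la A Y l 1 - Ybar_la A Y l 0)) / W A"

definition lam :: "real^('l::finite \<times> 'm::finite) \<Rightarrow> real \<Rightarrow> real" where
  "lam A s = (real CARD('l \<times> 'm) * W A) /
     (real (n_a A 1) * real (n_a A 0) * s + real CARD('l \<times> 'm) * W A)"

end

theory Submission
  imports Defs
begin

lemma matrix_inv_eq: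
  fixes A :: "real^'n^'n" and B :: "real^'n^'n"
  assumes "A ** B = mat 1" "B ** A = mat 1"
  shows "matrix_inv A = B"
proof -
  have ex: "\<exists>A'. A ** A' = mat 1 \<and> A' ** A = mat 1" using assms by blast
  define A' where "A' = matrix_inv A"
  have h: "A ** A' = mat 1 \<and> A' ** A = mat 1"
    unfolding A'_def matrix_inv_def by (rule someI_ex[OF ex])
  have "B = B ** (A ** A')" using h by (simp add: matrix_mul_rid)
  also have "\<dots> = (B ** A) ** A'" by (simp add: matrix_mul_assoc)
  also have "\<dots> = A'" using assms by (simp add: matrix_mul_lid)
  finally show ?thesis unfolding A'_def by simp
qed

lemma card_fst:
  "card {k::('l::finite \<times> 'm::finite). fst k = a} = CARD('m)"
proof -
  have "{k::('l \<times> 'm). fst k = a} = Pair a ` UNIV" by auto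
  then show ?thesis by (simp add: card_image inj_on_def)
qed

lemma sum_fst_const:
  "(\<Sum>k::('l::finite \<times> 'm::finite)\<in>UNIV. if fst k = a then c else 0) = real CARD('m) * c"
proof -
  have "(\<Sum>k::('l \<times> 'm)\<in>UNIV. if fst k = a then c else 0) = (\<Sum>k\<in>{k::('l \<times> 'm). fst k = a}. c)"
    by (simp add: sum.If_cases[of UNIV "\<lambda>k. fst k = a"] Collect_conv_if)
  then show ?thesis by (simp add: card_fst)
qed

lemma sum_pair:
  "(\<Sum>k\<in>(UNIV::('a::finite \<times> 'b::finite) set). f k) = (\<Sum>l\<in>UNIV. \<Sum>j\<in>UNIV. f (l,j))"
  by (subst sum.cartesian_product) (simp add: case_prod_eta)

definition Sinv :: "real \<Rightarrow> real^('l::finite \<times> 'm::finite)^('l \<times> 'm)" where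
  "Sinv s = (\<chi> i j. ((if i = j then 1 else 0) - (if fst i = fst j then 1 / (s + real CARD('m)) else 0)) / s)"

lemma Sinv_mulv:
  fixes v :: "real^('l::finite \<times> 'm::finite)"
  assumes "s > 0"
  shows "(\<Sum>k\<in>UNIV. Sinv s $ i $ k * v $ k) = (v $ i - (\<Sum>j\<in>UNIV. v $ (fst i, j)) / (s + real CARD('m))) / s"
proof -
  have p: "s + real CARD('m) > 0" "s * s + s * real CARD('m) > 0" using assms by (auto intro: add_pos_nonneg)
  have "(\<Sum>k\<in>UNIV. Sinv s $ i $ k * v $ k) = (\<Sum>k\<in>UNIV. (if i = k then v $ k else 0) / s
        - (if fst i = fst k then v $ k else 0) / (s + real CARD('m)) / s)"
    unfolding Sinv_def by (intro sum.cong) (auto simp: diff_divide_distrib left_diff_distrib)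
  also have "\<dots> = v $ i / s - (\<Sum>k\<in>UNIV. (if fst i = fst k then v $ k else 0)) / (s + real CARD('m)) / s"
    by (simp add: sum_subtractf sum_divide_distrib[symmetric])
  also have "(\<Sum>k\<in>UNIV. (if fst i = fst k then v $ k else 0)) = (\<Sum>j\<in>UNIV. v $ (fst i, j))"
  proof -
    have "(\<Sum>k\<in>UNIV. (if fst i = fst k then v $ k else 0)) = (\<Sum>l\<in>UNIV. \<Sum>j\<in>UNIV. (if fst i = l then v $ (l,j) else 0))"
      by (subst sum_pair) simp
    also have "\<dots> = (\<Sum>j\<in>UNIV. v $ (fst i, j))"
    proof -
      have "\<And>l. (\<Sum>j\<in>UNIV. if fst i = l then v $ (l, j) else 0) = (if fst i = l then (\<Sum>j\<in>UNIV. v $ (l, j)) else 0)"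
        by simp
      then show ?thesis by simp
    qed
    finally show ?thesis .
  qed
  finally show ?thesis by (simp add: diff_divide_distrib)
qed

lemma Sinv_Sigma:
  assumes "s > 0"
  shows "Sinv s ** Sigma_mat s = (mat 1 :: real^('l::finite \<times> 'm::finite)^('l \<times> 'm))"
proof -
  have p: "s + real CARD('m) > 0" "s * s + s * real CARD('m) > 0" using assms by (auto intro: add_pos_nonneg)
  have "(Sinv s ** Sigma_mat s) $ i $ j = (mat 1 :: real^('l \<times> 'm)^('l \<times> 'm)) $ i $ j" for i j :: "'l \<times> 'm"
  proof -
    obtain a b where j: "j = (a, b)" by force
    define v where "v = (\<chi> k. Sigma_mat s $ k $ j)"
    have "(Sinv s ** Sigma_mat s) $ i $ j = (\<Sum>k\<in>UNIV. Sinv s $ i $ k * v $ k)"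
      unfolding matrix_matrix_mult_def v_def by simp
    also have "\<dots> = (v $ i - (\<Sum>j'\<in>UNIV. v $ (fst i, j')) / (s + real CARD('m))) / s"
      by (rule Sinv_mulv[OF assms])
    also have "(\<Sum>j'\<in>UNIV. v $ (fst i, j')) = (\<Sum>j'\<in>UNIV. (if fst i = a then 1 else 0) + (if j' = b then (if fst i = a then s else 0) else 0))"
      unfolding v_def Sigma_mat_def j by (intro sum.cong) auto
    also have "\<dots> = (if fst i = a then 1 else 0) * real CARD('m) + (if fst i = a then s else 0)"
      by (simp add: sum.distrib)
    also have "\<dots> = (if fst i = a then s + real CARD('m) else 0)" by simp
    finally have eq: "(Sinv s ** Sigma_mat s) $ i $ j = (v $ i - (if fst i = a then s + real CARD('m) else 0) / (s + real CARD('m))) / s" .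
    have vi: "v $ i = (if fst i = a then 1 else 0) + (if i = j then s else 0)"
      unfolding v_def Sigma_mat_def j by auto
    show ?thesis unfolding eq vi using assms p unfolding mat_def j by (auto)
  qed
  then show ?thesis by (simp add: vec_eq_iff)
qed

lemma Sinv_sym: "transpose (Sinv s) = Sinv s"
  unfolding Sinv_def transpose_def by (auto simp: vec_eq_iff)

lemma Sigma_sym: "transpose (Sigma_mat s) = Sigma_mat s"
  unfolding Sigma_mat_def transpose_def by (auto simp: vec_eq_iff)

lemma Sigma_inv:
  assumes "s > 0"
  shows "matrix_inv (Sigma_mat s :: real^('l::finite \<times> 'm::finite)^('l \<times> 'm)) = Sinv s"
proof (rule matrix_inv_eq)
  show "Sinv s ** Sigma_mat s = mat 1" by (rule Sinv_Sigma[OF assms])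
  then show "Sigma_mat s ** Sinv s = mat 1" by (metis matrix_transpose_mul transpose_mat Sinv_sym Sigma_sym)
qed

lemma alg:
  fixes s n L n1 T S1 P Q2 :: real
  assumes s: "s > 0" and n: "n > 0" and L: "L > 0" and W: "n*n1 - Q2 > 0" and n1: "n1 > 0" and n0: "L*n - n1 > 0"
  defines "c \<equiv> s + n"
  defines "M11 \<equiv> (L*n - L*n*n/c)/s" and "M12 \<equiv> (n1 - n*n1/c)/s" and "M22 \<equiv> (n1 - Q2/c)/s"
      and "b1 \<equiv> (T - n*T/c)/s" and "b2 \<equiv> (S1 - P/c)/s"
  defines "lm \<equiv> (L*n*(n*n1 - Q2)) / (n1*(L*n-n1)* s + L*n*(n*n1-Q2))"
  shows "M11*M22 - M12*M12 \<noteq> 0"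
    and "(M11*b2 - M12*b1)/(M11*M22 - M12*M12) = lm * ((n*S1 - P)/(n*n1-Q2)) + (1 - lm) * (S1/n1 - (T-S1)/(L*n-n1))"
proof -
  have c: "c > 0" using s n unfolding c_def by simp
  have e1: "M11 = L*n/c" unfolding M11_def using s c by (simp add: field_simps; simp add: c_def algebra_simps)
  have e2: "M12 = n1/c" unfolding M12_def using s c by (simp add: field_simps; simp add: c_def algebra_simps)
  have e3: "M22 = (c*n1 - Q2)/(s*c)" unfolding M22_def using s c by (simp add: field_simps; simp add: c_def algebra_simps)
  have e4: "b1 = T/c" unfolding b1_def using s c by (simp add: field_simps; simp add: c_def algebra_simps)
  have e5: "b2 = (c*S1 - P)/(s*c)" unfolding b2_def using s c by (simp add: field_simps; simp add: c_def algebra_simps)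
  have D: "M11*M22 - M12*M12 = (n1*(L*n-n1)* s + L*n*(n*n1-Q2)) / (s*c*c)"
    unfolding e1 e2 e3 using s c by (simp add: field_simps; simp add: c_def algebra_simps)
  have Dp: "n1*(L*n-n1)* s + L*n*(n*n1-Q2) > 0"
    using s W n1 n0 n L by (intro add_pos_pos mult_pos_pos) (auto simp: zero_less_mult_iff)
  then show "M11*M22 - M12*M12 \<noteq> 0" using D s c by simp
  have Ln: "L*n > 0" using n0 n1 by simp
  have Nm: "M11*b2 - M12*b1 = (L*n*(n*S1 - P) + s*(L*n*S1 - n1*T)) / (s*c*c)"
    unfolding e1 e2 e4 e5 using s c by (simp add: field_simps; simp add: c_def algebra_simps)
  define Dn where "Dn = n1*(L*n-n1)* s + L*n*(n*n1-Q2)"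
  have l1: "(M11*b2 - M12*b1)/(M11*M22 - M12*M12) = (L*n*(n*S1 - P) + s*(L*n*S1 - n1*T)) / Dn"
    unfolding D Nm Dn_def[symmetric] using s c Dp unfolding Dn_def[symmetric] by simp
  have l2: "1 - lm = n1*(L*n-n1)* s / Dn" unfolding lm_def Dn_def[symmetric] using Dp unfolding Dn_def[symmetric]
    by (simp add: field_simps Dn_def)
  have l3: "lm * ((n*S1 - P)/(n*n1-Q2)) = L*n*(n*S1 - P) / Dn" unfolding lm_def Dn_def[symmetric] using W by simp
  have l4: "n1*(L*n-n1)* s / Dn * (S1/n1 - (T-S1)/(L*n-n1)) = s*(L*n*S1 - n1*T) / Dn"
    using n1 n0 Dp unfolding Dn_def[symmetric] by (simp add: field_simps)
  show "(M11*b2 - M12*b1)/(M11*M22 - M12*M12) = lm * ((n*S1 - P)/(n*n1-Q2)) + (1 - lm) * (S1/n1 - (T-S1)/(L*n-n1))"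
    unfolding l1 l2 l3 l4 by (simp add: add_divide_distrib)
qed

lemma inv2_row2:
  fixes M :: "real^2^2" and b :: "real^2"
  assumes D: "M$1$1*M$2$2 - M$1$2*M$2$1 \<noteq> 0"
  shows "(matrix_inv M *v b) $ 2 = (M$1$1 * b$2 - M$2$1 * b$1) / (M$1$1*M$2$2 - M$1$2*M$2$1)"
proof -
  define d where "d = M$1$1*M$2$2 - M$1$2*M$2$1"
  define B :: "real^2^2" where "B = (\<chi> i j. if i = 1 then (if j = 1 then M$2$2/d else - M$1$2/d)
                                else (if j = 1 then - M$2$1/d else M$1$1/d))"
  have d: "d \<noteq> 0" using D unfolding d_def .
  have n21: "(2::2) \<noteq> 1" by simp
  have "M ** B = mat 1" "B ** M = mat 1"
    unfolding B_def matrix_matrix_mult_def mat_def vec_eq_iff forall_2 sum_2 using d n21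
    by (simp add: field_simps, simp add: d_def algebra_simps)+
  then have "matrix_inv M = B" by (rule matrix_inv_eq)
  then show ?thesis unfolding B_def matrix_vector_mult_def sum_2 d_def[symmetric] using d n21
    by (simp add: diff_divide_distrib)
qed

lemma quad:
  fixes u v :: "real^('l::finite \<times> 'm::finite)"
  assumes "s > 0"
  shows "(\<Sum>i\<in>UNIV. u $ i * (\<Sum>k\<in>UNIV. Sinv s $ i $ k * v $ k))
     = ((\<Sum>i\<in>UNIV. u $ i * v $ i) - (\<Sum>l\<in>UNIV. (\<Sum>j\<in>UNIV. u $ (l,j)) * (\<Sum>j\<in>UNIV. v $ (l,j))) / (s + real CARD('m))) / s"
proof -
  have "(\<Sum>i\<in>UNIV. u $ i * (\<Sum>k\<in>UNIV. Sinv s $ i $ k * v $ k))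
      = (\<Sum>i\<in>UNIV. u $ i * v $ i / s - u $ i * (\<Sum>j\<in>UNIV. v $ (fst i, j)) / (s + real CARD('m)) / s)"
    by (simp add: Sinv_mulv[OF assms] diff_divide_distrib right_diff_distrib)
  also have "\<dots> = (\<Sum>i\<in>UNIV. u $ i * v $ i) / s - (\<Sum>i\<in>UNIV. u $ i * (\<Sum>j\<in>UNIV. v $ (fst i, j))) / (s + real CARD('m)) / s"
    by (simp add: sum_subtractf sum_divide_distrib)
  also have "(\<Sum>i\<in>UNIV. u $ i * (\<Sum>j\<in>UNIV. v $ (fst i, j))) = (\<Sum>l\<in>UNIV. (\<Sum>j\<in>UNIV. u $ (l,j)) * (\<Sum>j\<in>UNIV. v $ (l,j)))"
    by (subst sum_pair) (simp add: sum_distrib_right)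
  finally show ?thesis by (simp add: diff_divide_distrib)
qed

lemma card_real: "real (card {x::'a::finite. P x}) = (\<Sum>x\<in>UNIV. if P x then 1 else 0)"
  by (simp add: sum.If_cases)

lemma sum_set: "(\<Sum>x\<in>{x::'a::finite. P x}. f x) = (\<Sum>x\<in>UNIV. if P x then f x else (0::real))"
  by (simp add: sum.If_cases)

lemma mean_mult: "finite B \<Longrightarrow> real (card B) * (sum f B / real (card B)) = (sum f B :: real)"
  by (cases "card B = 0") auto

lemma entry_M:
  fixes X :: "real^2^('l::finite \<times> 'm::finite)" and S :: "real^('l \<times> 'm)^('l \<times> 'm)"
  shows "(transpose X ** S ** X) $ p $ q = (\<Sum>i\<in>UNIV. (\<chi> i. X$i$p) $ i * (\<Sum>k\<in>UNIV. S$i$k * (\<chi> k. X$k$q) $ k))"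
  unfolding matrix_mul_assoc[symmetric]
  by (simp add: matrix_matrix_mult_def transpose_def)

lemma entry_b:
  fixes X :: "real^2^('l::finite \<times> 'm::finite)" and S :: "real^('l \<times> 'm)^('l \<times> 'm)"
  shows "((transpose X ** S) *v Y) $ p = (\<Sum>i\<in>UNIV. (\<chi> i. X$i$p) $ i * (\<Sum>k\<in>UNIV. S$i$k * Y $ k))"
  unfolding matrix_vector_mul_assoc[symmetric]
  by (simp add: matrix_vector_mult_def transpose_def)

theorem mainTheorem5:
  fixes A Y :: "real^('l::finite \<times> 'm::finite)" and s :: real
  assumes binary: "\<forall>i. A $ i = 0 \<or> A $ i = 1"
    and n1_pos: "n_a A 1 > 0" and n0_pos: "n_a A 0 > 0"
    and W_pos: "W A > 0"
    and s_pos: "s > 0"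
  shows "tau_hat s A Y = lam A s * tau1_hat A Y + (1 - lam A s) * tau0_hat A Y
         \<and> (lam A \<longlongrightarrow> 1) (at_right 0)
         \<and> (\<forall>s1 s2. 0 < s1 \<longrightarrow> s1 < s2 \<longrightarrow> lam A s2 < lam A s1)"
proof -
  define n where "n = real CARD('m)"
  define L where "L = real CARD('l)"
  define a where "a l = (\<Sum>j\<in>UNIV. A $ (l,j))" for l
  define t where "t l = (\<Sum>j\<in>UNIV. Y $ (l,j))" for l
  define sa where "sa l = (\<Sum>j\<in>UNIV. A $ (l,j) * Y $ (l,j))" for l
  define n1 where "n1 = (\<Sum>l\<in>UNIV. a l)"
  define T where "T = (\<Sum>l\<in>UNIV. t l)"
  define S1 where "S1 = (\<Sum>l\<in>UNIV. sa l)"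
  define P where "P = (\<Sum>l\<in>UNIV. a l * t l)"
  define Q2 where "Q2 = (\<Sum>l\<in>UNIV. a l * a l)"
  have bi1: "(if A $ i = 1 then 1 else 0) = A $ i" for i using binary by (metis zero_neq_one)
  have bi0: "(if A $ i = 0 then 1 else 0) = 1 - A $ i" for i using binary by (metis diff_self zero_neq_one diff_zero)
  have biY1: "(if A $ i = 1 then Y $ i else 0) = A $ i * Y $ i" for i using binary by (metis zero_neq_one mult_1 mult_zero_left)
  have biY0: "(if A $ i = 0 then Y $ i else 0) = (1 - A $ i) * Y $ i" for i using binary
    by (metis zero_neq_one mult_1 mult_zero_left diff_self diff_zero)
  have bsq: "A $ i * A $ i = A $ i" for i using binary by (metis mult_1 mult_zero_left)
  have N: "real CARD('l \<times> 'm) = L * n" unfolding L_def n_def by simp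
  have nla1: "real (n_la A l 1) = a l" for l
    unfolding n_la_def a_def card_real by (simp add: bi1)
  have nla0: "real (n_la A l 0) = n - a l" for l
    unfolding n_la_def a_def card_real n_def by (simp add: bi0 sum_subtractf)
  have na1: "real (n_a A 1) = n1"
    unfolding n_a_def card_real n1_def a_def by (simp add: bi1 sum_pair)
  have na0: "real (n_a A 0) = L * n - n1"
    unfolding n_a_def card_real n1_def a_def by (simp add: bi0 sum_pair sum_subtractf L_def n_def)
  have WA: "W A = n * n1 - Q2"
    unfolding W_def nla1 nla0 n1_def Q2_def by (simp add: algebra_simps sum_subtractf sum_distrib_left)
  have trm: "real (n_la A l 0) * real (n_la A l 1) * (Ybar_la A Y l 1 - Ybar_la A Y l 0) = n * sa l - a l * t l" for l
  proof -
    have "real (n_la A l 0) * real (n_la A l 1) * (Ybar_la A Y l 1 - Ybar_la A Y l 0)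
       = real (n_la A l 0) * (real (n_la A l 1) * Ybar_la A Y l 1) - real (n_la A l 1) * (real (n_la A l 0) * Ybar_la A Y l 0)"
      by (simp add: algebra_simps)
    also have "real (n_la A l 1) * Ybar_la A Y l 1 = sa l"
      unfolding Ybar_la_def n_la_def by (subst mean_mult) (simp_all add: sum_set biY1 sa_def)
    also have "real (n_la A l 0) * Ybar_la A Y l 0 = t l - sa l"
      unfolding Ybar_la_def n_la_def by (subst mean_mult) (simp_all add: sum_set biY0 sa_def t_def left_diff_distrib sum_subtractf)
    finally show ?thesis unfolding nla0 nla1 by (simp add: algebra_simps)
  qed
  have tau1: "tau1_hat A Y = (n * S1 - P) / (n * n1 - Q2)"
    unfolding tau1_hat_def trm WA[symmetric] S1_def P_def by (simp add: sum_subtractf sum_distrib_left)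
  have tau0: "tau0_hat A Y = S1 / n1 - (T - S1) / (L * n - n1)"
    unfolding tau0_hat_def Ybar_a_def na1 na0
    by (simp add: sum_set biY1 biY0 left_diff_distrib sum_subtractf S1_def T_def sa_def t_def sum_pair)
  define X where "X = design A"
  define M where "M = transpose X ** Sinv s ** X"
  define bv where "bv = (transpose X ** Sinv s) *v Y"
  define c where "c = s + n"
  have X1: "(\<chi> i. X $ i $ 1) = (\<chi> i. 1)" unfolding X_def design_def by simp
  have X2: "(\<chi> i. X $ i $ 2) = A" unfolding X_def design_def by (simp add: vec_eq_iff)
  have th: "tau_hat s A Y = (matrix_inv M *v bv) $ 2"
    unfolding tau_hat_def gls_def Sigma_inv[OF s_pos] M_def bv_def X_def
    by (simp add: matrix_mul_assoc matrix_vector_mul_assoc)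
  have m11: "M$1$1 = (L*n - L*n*n/c)/s"
    unfolding M_def entry_M X1 quad[OF s_pos] c_def n_def L_def by (simp add: sum_pair)
  have m12: "M$1$2 = (n1 - n*n1/c)/s"
    unfolding M_def entry_M X1 X2 quad[OF s_pos] c_def n_def n1_def a_def by (simp add: sum_pair sum_distrib_left)
  have m21: "M$2$1 = (n1 - n*n1/c)/s"
    unfolding M_def entry_M X1 X2 quad[OF s_pos] c_def n_def n1_def a_def by (simp add: sum_pair sum_distrib_left mult.commute)
  have m22: "M$2$2 = (n1 - Q2/c)/s"
    unfolding M_def entry_M X2 quad[OF s_pos] c_def Q2_def n1_def a_def n_def by (simp add: sum_pair bsq)
  have b1: "bv$1 = (T - n*T/c)/s"
    unfolding bv_def entry_b X1 quad[OF s_pos] c_def n_def T_def t_def by (simp add: sum_pair sum_distrib_left)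
  have b2: "bv$2 = (S1 - P/c)/s"
    unfolding bv_def entry_b X2 quad[OF s_pos] c_def P_def S1_def a_def t_def sa_def n_def by (simp add: sum_pair)
  have npos: "n > 0" unfolding n_def by simp
  have Lpos: "L > 0" unfolding L_def by simp
  have Wp: "n*n1 - Q2 > 0" using W_pos WA by simp
  have n1p: "n1 > 0" using n1_pos na1 by simp
  have n0p: "L*n - n1 > 0" using n0_pos na0 by (metis of_nat_0_less_iff)
  note AL1 = alg(1)[OF s_pos npos Lpos Wp n1p n0p, folded c_def]
  note AL2 = alg(2)[OF s_pos npos Lpos Wp n1p n0p, of S1 P T, folded c_def]
  have Dne: "M$1$1*M$2$2 - M$1$2*M$2$1 \<noteq> 0" unfolding m11 m12 m21 m22 using AL1 .
  have eq1: "tau_hat s A Y = lam A s * tau1_hat A Y + (1 - lam A s) * tau0_hat A Y"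
    unfolding th inv2_row2[OF Dne] unfolding m11 m12 m21 m22 b1 b2 AL2 tau1 tau0
      lam_def N WA na1 na0 by simp
  define K where "K = L * n * (n*n1 - Q2)"
  define k where "k = n1 * (L*n - n1)"
  have Kp: "K > 0" unfolding K_def using npos Lpos Wp by simp
  have kp: "k > 0" unfolding k_def using n1p n0p by simp
  have lamf: "lam A = (\<lambda>x. K / (k * x + K))"
    unfolding lam_def N WA na1 na0 K_def k_def by (simp add: fun_eq_iff)
  have "((\<lambda>x. K / (k * x + K)) \<longlongrightarrow> K / (k * 0 + K)) (at_right 0)"
    using Kp by (intro tendsto_intros) auto
  then have lim: "(lam A \<longlongrightarrow> 1) (at_right 0)" unfolding lamf using Kp by simp
  have mono: "\<forall>s1 s2. 0 < s1 \<longrightarrow> s1 < s2 \<longrightarrow> lam A s2 < lam A s1"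
  proof (intro allI impI)
    fix s1 s2 :: real assume h: "0 < s1" "s1 < s2"
    have "k * s1 + K < k * s2 + K" using h kp by simp
    moreover have "0 < (k * s2 + K) * (k * s1 + K)" using h kp Kp by (intro mult_pos_pos add_pos_pos) auto
    ultimately show "lam A s2 < lam A s1" unfolding lamf using Kp
      by (simp add: divide_strict_left_mono)
  qed
  show ?thesis using eq1 lim mono by blast
qed

end
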